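(* In the transactional panorama model described in the context, answering every read transaction so as to maintain consistency-fresh ($C_f$), i.e., returning the states of its views from the latest version of the view graph, also maintains monotonicity; however, consistency-fresh and visibility cannot always be maintained together (there are executions in which the states returned under consistency-fresh contain a UC).
   Context: A view graph is a directed acyclic graph on a fixed set $N$ of nodes (source data and views); there is an edge $n_j \to n_i$ if view $n_i$ takes $n_j$ as input, and the dependents of a node are the nodes reachable from it. The view graph is multi-versioned. Write transactions $w^{t_1},\dots,w^{t_n}$ (timestamps $t_1<\dots<t_n$, starting from an initial version $G^{t_0}$) each modify some source nodes and must recompute their dependents; they are processed one at a time in timestamp order. Write transaction $w^{t_i}$ creates version $G^{t_i}=(E,N,V^{t_i})$, where for each node $n_k$ the set $V^{t_i}$ contains: the result $v_k^{t_i}$ if $w^{t_i}$ updates $n_k$ and has already computed it; a placeholder $UC_k^{t_i}$ ("under computation") if $w^{t_i}$ updates $n_k$ but has not yet computed it; or the result of $n_k$ from the previous version if $w^{t_i}$ does not update $n_k$. The latest version is the version created by the most recent write transaction (possibly not yet committed). The timestamp of a returned state is the timestamp of the version it belongs to. Read transactions $r^{s_1},\dots,r^{s_m}$ ($s_1<\dots<s_m$) each read the set of views in the user's current viewport (a subset of $N$, which may change between reads) and return immediately, without waiting, a set $H^{s_i}$ containing one state (a view result or a UC) per view read. Monotonicity: for any view $n_k$ read by two transactions $r^{s_i}, r^{s_j}$ with $s_i<s_j$, returning states with timestamps $t_p$ and $t_q$, we have $t_p \le t_q$. Visibility: no $H^{s_i}$ contains a UC. Consistency: for each $r^{s_i}$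 there is a version $G^{t_j}=(E,N,V^{t_j})$ with $t_j\le s_i$ and $H^{s_i}\subseteq V^{t_j}$. *)

theory Defs
  imports Main "HOL-Library.Library"
begin

text \<open>States of a node in a version: a computed view result, or a placeholder
  UC (under computation).  Each state records the node it belongs to and the
  timestamp of the write transaction that produced it (the initial version has
  timestamp t 0).\<close>
datatype 'n vstate = Val 'n real | UC 'n real

fun st_node :: "'n vstate \<Rightarrow> 'n" where
  "st_node (Val k x) = k" | "st_node (UC k x) = k"

fun st_ts :: "'n vstate \<Rightarrow> real" where
  "st_ts (Val k x) = x" | "st_ts (UC k x) = x"

fun is_UC :: "'n vstate \<Rightarrow> bool" where
  "is_UC (Val k x) = False" | "is_UC (UC k x) = True"

text \<open>View graph: edge (nj, ni) \<in> E iff view ni takes nj as input.  The node set N is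
  the universe of type 'n.  Source nodes have no inputs.\<close>
definition sources :: "('n \<times> 'n) set \<Rightarrow> 'n set" where
  "sources E = {k. \<forall>j. (j, k) \<notin> E}"

definition upd :: "('n \<times> 'n) set \<Rightarrow> (nat \<Rightarrow> 'n set) \<Rightarrow> nat \<Rightarrow> 'n set" where
  "upd E S i = (E\<^sup>*) `` S i"

text \<open>Contents V^{t_i} of version G^{t_i} while write i has computed exactly the nodes
  in C (of those it updates).  Earlier writes have completed, since writes are
  processed one at a time in timestamp order.\<close>
fun ver :: "('n \<times> 'n) set \<Rightarrow> (nat \<Rightarrow> 'n set) \<Rightarrow> (nat \<Rightarrow> real) \<Rightarrow> nat \<Rightarrow> 'n set \<Rightarrow> 'n \<Rightarrow> 'n vstate" where
  "ver E S t 0 C k = Val k (t 0)"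
| "ver E S t (Suc i) C k =
     (if k \<in> upd E S (Suc i)
      then (if k \<in> C then Val k (t (Suc i)) else UC k (t (Suc i)))
      else ver E S t i (upd E S i) k)"

text \<open>An execution maps each time \<tau> to (L, C): L is the index of the most recent write
  transaction (the one that created the latest version; 0 = only the initial version)
  and C is the set of nodes that write has computed so far.\<close>
definition wf_exec :: "('n \<times> 'n) set \<Rightarrow> (nat \<Rightarrow> 'n set) \<Rightarrow> (nat \<Rightarrow> real) \<Rightarrow> nat
    \<Rightarrow> (real \<Rightarrow> nat \<times> 'n set) \<Rightarrow> bool" where
  "wf_exec E S t n ex \<longleftrightarrow>
     (\<forall>\<tau>. fst (ex \<tau>) \<le> n \<and> snd (ex \<tau>) \<subseteq> upd E S (fst (ex \<tau>))
          \<and> (fst (ex \<tau>) = 0 \<or> t (fst (ex \<tau>)) \<le> \<tau>)) \<and>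
     (\<forall>\<tau> \<tau>'. \<tau> \<le> \<tau>' \<longrightarrow> fst (ex \<tau>) \<le> fst (ex \<tau>') \<and>
          (fst (ex \<tau>) = fst (ex \<tau>') \<longrightarrow> snd (ex \<tau>) \<subseteq> snd (ex \<tau>')))"

definition wf_setting :: "('n \<times> 'n) set \<Rightarrow> (nat \<Rightarrow> 'n set) \<Rightarrow> (nat \<Rightarrow> real) \<Rightarrow> nat \<Rightarrow> bool" where
  "wf_setting E S t n \<longleftrightarrow> acyclic E \<and> strict_mono_on {0..n} t \<and>
     (\<forall>i\<in>{1..n}. S i \<subseteq> sources E)"

text \<open>Consistency-fresh answer H^{s_j} of read j (at time s j, reading viewport R j):
  the states of its views in the latest version.\<close>
definition cf_answer :: "('n \<times> 'n) set \<Rightarrow> (nat \<Rightarrow> 'n set) \<Rightarrow> (nat \<Rightarrow> real)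
    \<Rightarrow> (real \<Rightarrow> nat \<times> 'n set) \<Rightarrow> (nat \<Rightarrow> real) \<Rightarrow> (nat \<Rightarrow> 'n set) \<Rightarrow> nat \<Rightarrow> 'n vstate set" where
  "cf_answer E S t ex s R j =
     (let (L, C) = ex (s j) in (\<lambda>k. ver E S t L C k) ` R j)"

definition monotonic :: "(nat \<Rightarrow> real) \<Rightarrow> nat \<Rightarrow> (nat \<Rightarrow> 'n vstate set) \<Rightarrow> bool" where
  "monotonic s m H \<longleftrightarrow> (\<forall>i\<in>{1..m}. \<forall>j\<in>{1..m}. s i < s j \<longrightarrow>
     (\<forall>x\<in>H i. \<forall>y\<in>H j. st_node x = st_node y \<longrightarrow> st_ts x \<le> st_ts y))"

definition visible :: "nat \<Rightarrow> (nat \<Rightarrow> 'n vstate set) \<Rightarrow> bool" where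
  "visible m H \<longleftrightarrow> (\<forall>j\<in>{1..m}. \<forall>x\<in>H j. \<not> is_UC x)"

end

theory Submission
  imports Defs
begin

lemma ts_indep: "st_ts (ver E S t L C k) = st_ts (ver E S t L C' k)"
  by (cases L) auto

lemma node_ver: "st_node (ver E S t L C k) = k"
  by (induction L arbitrary: C) auto

lemma ts_le: "strict_mono_on {0..n} t \<Longrightarrow> L \<le> n \<Longrightarrow> st_ts (ver E S t L C k) \<le> t L"
proof (induction L arbitrary: C)
  case 0 then show ?case by simp
next
  case (Suc i)
  have "t i < t (Suc i)" using Suc.prems by (auto simp: strict_mono_on_def)
  moreover have "st_ts (ver E S t i (upd E S i) k) \<le> t i"
    using Suc.IH[of "upd E S i"] Suc.prems by simp
  ultimately show ?case by simp
qed

lemma ts_mono: "strict_mono_on {0..n} t \<Longrightarrow> L2 \<le> n \<Longrightarrow> L1 \<le> L2 \<Longrightarrow>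
   st_ts (ver E S t L1 C1 k) \<le> st_ts (ver E S t L2 C2 k)"
proof (induction L2 arbitrary: L1 C1 C2)
  case 0 then show ?case by simp
next
  case (Suc i)
  show ?case
  proof (cases "L1 = Suc i")
    case True then show ?thesis using ts_indep by (metis order_refl)
  next
    case False
    then have L1: "L1 \<le> i" using Suc.prems by simp
    have a: "st_ts (ver E S t L1 C1 k) \<le> t L1" using ts_le[of n t L1] Suc.prems L1 by simp
    have "t L1 \<le> t (Suc i)" 
      by (rule strict_mono_on_leD[OF Suc.prems(1)]) (use Suc.prems L1 in auto)
    then show ?thesis using a Suc.IH[of L1 C1] Suc.prems L1 by auto
  qed
qed

theorem theorem2p5:
  shows "(\<forall>(E :: ('n \<times> 'n) set) S t n ex (s :: nat \<Rightarrow> real) R m.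
            wf_setting E S t n \<and> wf_exec E S t n ex \<and> strict_mono_on {1..m} s
            \<longrightarrow> monotonic s m (cf_answer E S t ex s R))
       \<and> (\<exists>(E :: ('n \<times> 'n) set) S t n ex (s :: nat \<Rightarrow> real) R m.
            wf_setting E S t n \<and> wf_exec E S t n ex \<and> strict_mono_on {1..m} s
            \<and> \<not> visible m (cf_answer E S t ex s R))"
proof
  show "\<forall>(E :: ('n \<times> 'n) set) S t n ex (s :: nat \<Rightarrow> real) R m.
            wf_setting E S t n \<and> wf_exec E S t n ex \<and> strict_mono_on {1..m} s
            \<longrightarrow> monotonic s m (cf_answer E S t ex s R)"
  proof (intro allI impI)
    fix E :: "('n \<times> 'n) set" and S t n ex and s :: "nat \<Rightarrow> real" and R m
    assume h: "wf_setting E S t n \<and> wf_exec E S t n ex \<and> strict_mono_on {1..m} s"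
    have sm: "strict_mono_on {0..n} t" using h by (simp add: wf_setting_def)
    show "monotonic s m (cf_answer E S t ex s R)"
      unfolding monotonic_def
    proof (intro ballI impI)
      fix i j x y
      assume ij: "s i < s j" and x: "x \<in> cf_answer E S t ex s R i"
        and y: "y \<in> cf_answer E S t ex s R j" and nd: "st_node x = st_node y"
      obtain L1 C1 where e1: "ex (s i) = (L1, C1)" by fastforce
      obtain L2 C2 where e2: "ex (s j) = (L2, C2)" by fastforce
      have w: "wf_exec E S t n ex" using h by simp
      have "fst (ex (s i)) \<le> fst (ex (s j))" using w ij unfolding wf_exec_def by simp
      then have "L1 \<le> L2" using e1 e2 by simp
      have "fst (ex (s j)) \<le> n" using w unfolding wf_exec_def by simp
      then have "L2 \<le> n" using e2 by simp
      obtain k1 where k1: "x = ver E S t L1 C1 k1" using x e1 by (auto simp: cf_answer_def)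
      obtain k2 where k2: "y = ver E S t L2 C2 k2" using y e2 by (auto simp: cf_answer_def)
      have "k1 = k2" using nd k1 k2 node_ver by metis
      then show "st_ts x \<le> st_ts y" using k1 k2 ts_mono sm \<open>L1 \<le> L2\<close> \<open>L2 \<le> n\<close> by metis
    qed
  qed
next
  define ex :: "real \<Rightarrow> nat \<times> 'n set" where "ex = (\<lambda>\<tau>. if 1 \<le> \<tau> then (1, {}) else (0, {}))"
  define t :: "nat \<Rightarrow> real" where "t = real"
  have ws: "wf_setting ({} :: ('n \<times> 'n) set) (\<lambda>_. UNIV) t 1"
    by (auto simp: wf_setting_def sources_def t_def strict_mono_on_def acyclic_def)
  have we: "wf_exec ({} :: ('n \<times> 'n) set) (\<lambda>_. UNIV) t 1 ex"
    by (auto simp: wf_exec_def ex_def t_def)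
  have sm: "strict_mono_on {1..1::nat} (\<lambda>_. 1::real)"
    by (auto simp: strict_mono_on_def)
  have nv: "\<not> visible 1 (cf_answer ({} :: ('n \<times> 'n) set) (\<lambda>_. UNIV) t ex (\<lambda>_. 1) (\<lambda>_. UNIV))"
  proof -
    have "UC undefined 1 \<in> cf_answer ({} :: ('n \<times> 'n) set) (\<lambda>_. UNIV) t ex (\<lambda>_. 1) (\<lambda>_. UNIV) 1"
      by (simp add: cf_answer_def ex_def upd_def t_def image_iff)
    then show ?thesis unfolding visible_def by force
  qed
  show "\<exists>(E :: ('n \<times> 'n) set) S t n ex (s :: nat \<Rightarrow> real) R m.
            wf_setting E S t n \<and> wf_exec E S t n ex \<and> strict_mono_on {1..m} s
            \<and> \<not> visible m (cf_answer E S t ex s R)"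
    using ws we sm nv by blast
qed

end
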